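(* For every integer $d\ge1$, $$\rho(0,d)=\frac{1}{d\,\varphi(d)},\qquad \rho(d,2d)=\begin{cases}\rho(0,2d)&\text{if $d$ is odd},\\ 3\rho(0,2d)&\text{if $d$ is even}.\end{cases}$$
   Context: $\varphi$ is Euler's totient. For integers $a$ and $d\ge1$, $\rho(a,d)=A\sum_{t\ge1,\ t\equiv a\pmod d}r(t)$, where $A=\prod_p\bigl(1-\frac{1}{p(p-1)}\bigr)$ (product over primes) and $r(t)=\frac{1}{t^2}\prod_{p\mid t}\frac{p^2-1}{p^2-p-1}$; equivalently $\rho(a,d)$ is the average over primes $p$ of the proportion of elements of $\mathbb F_p^*$ whose index $[\mathbb F_p^*:\langle x\rangle]$ is $\equiv a\pmod d$. *)

theory Defs
  imports "HOL-Analysis.Analysis" "HOL-Number_Theory.Number_Theory"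
begin

definition artinA :: real where
  "artinA = (\<Prod>n. if prime n then 1 - 1 / (real n * (real n - 1)) else 1)"

definition rfun :: "nat \<Rightarrow> real" where
  "rfun t = (1 / (real t)^2) *
     (\<Prod>p\<in>prime_factors t. ((real p)^2 - 1) / ((real p)^2 - real p - 1))"

definition rho :: "int \<Rightarrow> nat \<Rightarrow> real" where
  "rho a d = artinA * infsum rfun {t::nat. t \<ge> 1 \<and> [int t = a] (mod int d)}"

end

theory Submission
  imports Defs
begin

definition SS :: "nat \<Rightarrow> nat set" where
  "SS N = {t. t > 0 \<and> (\<forall>p\<in>prime_factors t. p \<le> N)}"

lemma SS_0: "SS 0 = {1}"
proof -
  have "t = 1" if "t > 0" "\<forall>p\<in>prime_factors t. p \<le> 0" for t :: nat
  proof (rule ccontr)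
    assume "t \<noteq> 1"
    then obtain p where "prime p" "p dvd t" using prime_factor_nat by blast
    then have "p \<in> prime_factors t" using that by (simp add: in_prime_factors_iff)
    then have "p \<le> 0" using that(2) by blast
    with \<open>prime p\<close> show False using prime_gt_0_nat by simp
  qed
  then show ?thesis unfolding SS_def by auto
qed

lemma SS_nonprime: assumes "\<not> prime (Suc n)" shows "SS (Suc n) = SS n"
proof -
  have "(\<forall>p\<in>prime_factors t. p \<le> Suc n) \<longleftrightarrow> (\<forall>p\<in>prime_factors t. p \<le> n)" for t
  proof -
    have "p \<noteq> Suc n" if "p \<in> prime_factors t" for p
      using that assms by blast
    then show ?thesis by (meson le_Suc_eq le_SucI)
  qed
  then show ?thesis unfolding SS_def by simp
qed

lemma mult_pk: assumes "prime (p::nat)" "\<not> p dvd s" "s > 0"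
  shows "multiplicity p (p^k * s) = k"
proof -
  have "multiplicity p (p^k * s) = multiplicity p (p^k) + multiplicity p s"
    using assms by (intro prime_elem_multiplicity_mult_distrib) auto
  moreover have "multiplicity p s = 0" using assms(2) by (rule not_dvd_imp_multiplicity_0)
  ultimately show ?thesis using assms(1) by simp
qed

lemma SS_prime:
  assumes p: "prime (Suc n)"
  shows "SS (Suc n) = (\<lambda>(k,s). (Suc n)^k * s) ` (UNIV \<times> SS n)"
    and "inj_on (\<lambda>(k,s). (Suc n)^k * s) (UNIV \<times> SS n)"
proof -
  define p where "p = Suc n"
  have pp: "prime p" using p by (simp add: p_def)
  have ndvd: "\<not> p dvd s" if "s \<in> SS n" for s
  proof
    assume "p dvd s"
    with that pp have "p \<in> prime_factors s" by (intro prime_factorsI) (auto simp: SS_def)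
    with that show False by (auto simp: SS_def p_def)
  qed
  show "inj_on (\<lambda>(k,s). (Suc n)^k * s) (UNIV \<times> SS n)"
  proof (rule inj_onI, clarsimp)
    fix k s k' s' assume s: "s \<in> SS n" and s': "s' \<in> SS n" and eq: "Suc n ^ k * s = Suc n ^ k' * s'"
    have m1: "multiplicity p (p^k * s) = k"
      using ndvd[OF s] pp s by (intro mult_pk) (auto simp: SS_def)
    have m2: "multiplicity p (p^k' * s') = k'"
      using ndvd[OF s'] pp s' by (intro mult_pk) (auto simp: SS_def)
    have "k = k'" using m1 m2 unfolding p_def eq by simp
    then show "k = k' \<and> s = s'" using eq by simp
  qed
  show "SS (Suc n) = (\<lambda>(k,s). (Suc n)^k * s) ` (UNIV \<times> SS n)"
  proof
    show "SS (Suc n) \<subseteq> (\<lambda>(k,s). (Suc n)^k * s) ` (UNIV \<times> SS n)"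
    proof
      fix t assume t: "t \<in> SS (Suc n)"
      have "t > 0" using t by (simp add: SS_def)
      have "\<not> is_unit p" using pp by (simp add: prime_nat_iff)
      then obtain y where y: "t = p ^ multiplicity p t * y" "\<not> p dvd y"
        using multiplicity_decompose'[of t p] \<open>t > 0\<close> by blast
      then have y0: "y > 0" using y(1) by (cases "y = 0") auto
      have "y \<in> SS n"
      proof -
        have "q \<le> n" if q: "q \<in> prime_factors y" for q
        proof -
          have "q dvd y" using q by blast
          then have "q dvd t" using y(1) by (metis dvd_mult)
          then have "q \<in> prime_factors t" using q \<open>t > 0\<close> by (auto simp: in_prime_factors_iff)
          then have "q \<le> Suc n" using t by (auto simp: SS_def)
          moreover have "q \<noteq> p" using q y by auto
          ultimately show ?thesis by (simp add: p_def)
        qed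
        then show ?thesis using y0 by (simp add: SS_def)
      qed
      have e: "t = (\<lambda>(k,s). p^k * s) (multiplicity p t, y)"
        unfolding prod.case by (rule y(1))
      have "t \<in> (\<lambda>(k,s). p^k * s) ` (UNIV \<times> SS n)"
        by (rule image_eqI[where f = "\<lambda>(k,s). p^k * s" and x = "(multiplicity p t, y)", OF e]) (simp add: \<open>y \<in> SS n\<close>)
      then show "t \<in> (\<lambda>(k,s). (Suc n)^k * s) ` (UNIV \<times> SS n)"
        unfolding p_def .
    qed
  next
    show "(\<lambda>(k,s). (Suc n)^k * s) ` (UNIV \<times> SS n) \<subseteq> SS (Suc n)"
    proof clarsimp
      fix k s assume s: "s \<in> SS n"
      have s0: "s > 0" using s by (simp add: SS_def)
      have "q \<le> Suc n" if q: "q \<in> prime_factors (Suc n ^ k * s)" for q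
      proof -
        have qp: "prime q" and "q dvd Suc n ^ k * s" using q by auto
        then have "q dvd Suc n ^ k \<or> q dvd s" using prime_dvd_mult_iff by blast
        then show ?thesis
        proof
          assume "q dvd Suc n ^ k"
          then have "q dvd Suc n" using qp prime_dvd_power by blast
          then show ?thesis by (simp add: dvd_imp_le)
        next
          assume "q dvd s"
          then have "q \<in> prime_factors s" using qp s0 by (auto simp: in_prime_factors_iff)
          then show ?thesis using s by (auto simp: SS_def)
        qed
      qed
      then show "Suc n ^ k * s \<in> SS (Suc n)" using s0 by (simp add: SS_def)
    qed
  qed
qed


lemma has_sum_prod_nonneg:
  fixes g h :: "_ \<Rightarrow> real"
  assumes g: "(g has_sum a) A" and h: "(h has_sum b) B"
    and gn: "\<And>x. x \<in> A \<Longrightarrow> g x \<ge> 0" and hn: "\<And>y. y \<in> B \<Longrightarrow> h y \<ge> 0"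
  shows "((\<lambda>(x,y). g x * h y) has_sum (a*b)) (A \<times> B)"
proof -
  have a0: "a \<ge> 0" using has_sum_nonneg[OF g] gn by blast
  have summ: "(\<lambda>(x,y). g x * h y) summable_on (A \<times> B)"
  proof (rule nonneg_bdd_above_summable_on)
    show "\<And>z. z \<in> A \<times> B \<Longrightarrow> 0 \<le> (case z of (x,y) \<Rightarrow> g x * h y)"
      using gn hn by (auto intro: mult_nonneg_nonneg)
    show "bdd_above (sum (\<lambda>(x,y). g x * h y) ` {F. F \<subseteq> A \<times> B \<and> finite F})"
    proof (rule bdd_aboveI2)
      fix F assume F: "F \<in> {F. F \<subseteq> A \<times> B \<and> finite F}"
      then have Fs: "F \<subseteq> A \<times> B" and Ff: "finite F" by auto
      have fs: "fst ` F \<subseteq> A" "snd ` F \<subseteq> B" using Fs by auto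
      have "sum (\<lambda>(x,y). g x * h y) F \<le> sum (\<lambda>(x,y). g x * h y) (fst ` F \<times> snd ` F)"
      proof (rule sum_mono2)
        show "finite (fst ` F \<times> snd ` F)" using Ff by simp
        show "F \<subseteq> fst ` F \<times> snd ` F" by force
        show "\<And>z. z \<in> fst ` F \<times> snd ` F - F \<Longrightarrow> 0 \<le> (case z of (x,y) \<Rightarrow> g x * h y)"
          using fs gn hn by (auto intro!: mult_nonneg_nonneg)
      qed
      also have "\<dots> = sum g (fst ` F) * sum h (snd ` F)"
        by (simp add: sum_product sum.cartesian_product)
      also have "\<dots> \<le> a * b"
      proof (rule mult_mono)
        show "sum g (fst ` F) \<le> a"
          using has_sum_mono'[OF has_sum_finite[of "fst ` F" g] g] fs gn Ff by auto
        show "sum h (snd ` F) \<le> b"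
          using has_sum_mono'[OF has_sum_finite[of "snd ` F" h] h] fs hn Ff by auto
        show "0 \<le> a" by (rule a0)
        show "0 \<le> sum h (snd ` F)" using fs hn by (auto intro: sum_nonneg)
      qed
      finally show "sum (\<lambda>(x,y). g x * h y) F \<le> a * b" .
    qed
  qed
  have "((\<lambda>z. case z of (x,y) \<Rightarrow> g x * h y) has_sum (a*b)) (Sigma A (\<lambda>_. B))"
  proof (rule has_sum_SigmaI)
    show "\<And>x. x \<in> A \<Longrightarrow> ((\<lambda>y. case (x, y) of (x,y) \<Rightarrow> g x * h y) has_sum g x * b) B"
      using has_sum_cmult_right[OF h] by simp
    show "((\<lambda>x. g x * b) has_sum a * b) A" using has_sum_cmult_left[OF g] .
    show "(\<lambda>(x,y). g x * h y) summable_on Sigma A (\<lambda>_. B)" using summ by simp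
  qed
  then show ?thesis by simp
qed

lemma euler_SS:
  fixes f :: "nat \<Rightarrow> real" and L :: "nat \<Rightarrow> real"
  assumes mult: "\<And>a b. coprime a b \<Longrightarrow> a > 0 \<Longrightarrow> b > 0 \<Longrightarrow> f (a*b) = f a * f b"
    and f1: "f 1 = 1"
    and nn: "\<And>t. t > 0 \<Longrightarrow> f t \<ge> 0"
    and loc: "\<And>p. prime p \<Longrightarrow> ((\<lambda>k. f (p^k)) has_sum L p) UNIV"
  shows "(f has_sum (\<Prod>p\<in>{p. prime p \<and> p \<le> N}. L p)) (SS N)"
proof (induction N)
  case 0
  have E: "{p::nat. prime p \<and> p \<le> 0} = {}" by auto
  have "(f has_sum 1) {1}" using has_sum_finite[of "{1}" f] f1 by simp
  then show ?case by (simp only: SS_0 E prod.empty)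
next
  case (Suc n)
  show ?case
  proof (cases "prime (Suc n)")
    case False
    then have "{p. prime p \<and> p \<le> Suc n} = {p. prime p \<and> p \<le> n}"
      using le_Suc_eq by auto
    then show ?thesis using Suc False by (simp add: SS_nonprime)
  next
    case True
    define p where "p = Suc n"
    have P: "{p. prime p \<and> p \<le> Suc n} = insert (Suc n) {p. prime p \<and> p \<le> n}"
      using True le_Suc_eq by auto
    have "((\<lambda>(k,s). f (p^k) * f s) has_sum (L p * (\<Prod>p\<in>{p. prime p \<and> p \<le> n}. L p))) ((UNIV::nat set) \<times> SS n)"
    proof (rule has_sum_prod_nonneg)
      show "((\<lambda>k. f (p^k)) has_sum L p) UNIV" using loc True by (simp add: p_def)
      show "(f has_sum (\<Prod>p\<in>{p. prime p \<and> p \<le> n}. L p)) (SS n)" by (rule Suc.IH)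
      show "\<And>k. k \<in> UNIV \<Longrightarrow> 0 \<le> f (p^k)" using nn by (simp add: p_def)
      show "\<And>s. s \<in> SS n \<Longrightarrow> 0 \<le> f s" using nn by (simp add: SS_def)
    qed
    moreover have "((\<lambda>(k,s). f (p^k) * f s) has_sum x) ((UNIV::nat set) \<times> SS n) \<longleftrightarrow> ((f \<circ> (\<lambda>(k,s). p^k * s)) has_sum x) ((UNIV::nat set) \<times> SS n)" for x
    proof (rule has_sum_cong)
      fix z assume z: "z \<in> (UNIV::nat set) \<times> SS n"
      obtain k s where zks: "z = (k,s)" by fastforce
      have s: "s \<in> SS n" using z zks by simp
      have s0: "s > 0" using s by (simp add: SS_def)
      have "coprime p s"
      proof (rule ccontr)
        assume "\<not> coprime p s"
        then have "p dvd s" using True prime_imp_coprime unfolding p_def by blast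
        then have "p \<in> prime_factors s" using True s0 by (simp add: p_def in_prime_factors_iff)
        then have "p \<le> n" using s by (auto simp: SS_def)
        then show False by (simp add: p_def)
      qed
      then have "coprime (p^k) s" by simp
      moreover have "p^k > 0" using True by (simp add: p_def)
      ultimately show "(case z of (k,s) \<Rightarrow> f (p^k) * f s) = (f \<circ> (\<lambda>(k,s). p^k * s)) z"
        using mult s0 zks by simp
    qed
    ultimately have "((f \<circ> (\<lambda>(k,s). p^k * s)) has_sum (L p * (\<Prod>p\<in>{p. prime p \<and> p \<le> n}. L p))) ((UNIV::nat set) \<times> SS n)"
      by blast
    then have "(f has_sum (L p * (\<Prod>p\<in>{p. prime p \<and> p \<le> n}. L p))) ((\<lambda>(k,s). p^k * s) ` ((UNIV::nat set) \<times> SS n))"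
      unfolding p_def by (subst has_sum_reindex[OF SS_prime(2)[OF True]]) (simp only: p_def)
    then show ?thesis using SS_prime(1)[OF True] P by (simp add: p_def)
  qed
qed


lemma has_sum_SS_limit:
  fixes f :: "nat \<Rightarrow> real"
  assumes nn: "\<And>t. t > 0 \<Longrightarrow> f t \<ge> 0" and hs: "\<And>N. (f has_sum s N) (SS N)"
    and lim: "s \<longlonglongrightarrow> l"
  shows "(f has_sum l) {t. t > 0}"
proof -
  have SS_mono: "SS N \<subseteq> SS M" if "N \<le> M" for N M using that unfolding SS_def by fastforce
  have SS_sub: "SS N \<subseteq> {t. t > 0}" for N unfolding SS_def by auto
  have mono: "incseq s"
  proof (rule incseq_SucI)
    fix n
    show "s n \<le> s (Suc n)"
      by (rule has_sum_mono'[OF hs hs]) (use SS_mono[of n "Suc n"] SS_sub nn in auto)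
  qed
  have sl: "s N \<le> l" for N using incseq_le[OF mono lim] .
  have fin: "F \<subseteq> SS (Max (insert 0 F))" if F: "finite F" "F \<subseteq> {t. t > 0}" for F
  proof
    fix t assume t: "t \<in> F"
    have "t \<le> Max (insert 0 F)" using F t by simp
    moreover have "t > 0" using F t by auto
    moreover have "p \<le> t" if "p \<in> prime_factors t" for p
      using that \<open>t > 0\<close> by (auto intro: dvd_imp_le)
    ultimately show "t \<in> SS (Max (insert 0 F))" unfolding SS_def by force
  qed
  have bound: "sum f F \<le> l" if F: "finite F" "F \<subseteq> {t. t > 0}" for F
  proof -
    have "sum f F \<le> s (Max (insert 0 F))"
      by (rule has_sum_mono'[OF has_sum_finite[OF F(1)] hs]) (use fin[OF F] SS_sub nn in auto)
    then show ?thesis using sl order_trans by blast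
  qed
  have summ: "f summable_on {t. t > 0}"
  proof (rule nonneg_bdd_above_summable_on)
    show "\<And>x. x \<in> {t. t > 0} \<Longrightarrow> 0 \<le> f x" using nn by auto
    show "bdd_above (sum f ` {F. F \<subseteq> {t. t > 0} \<and> finite F})"
      by (rule bdd_aboveI2[where M = l]) (use bound in auto)
  qed
  have le: "infsum f {t. t > 0} \<le> l"
    by (rule infsum_le_finite_sums[OF summ]) (use bound in auto)
  have "s N \<le> infsum f {t. t > 0}" for N
    by (rule has_sum_mono'[OF hs has_sum_infsum[OF summ]]) (use SS_sub nn in auto)
  then have "l \<le> infsum f {t. t > 0}"
    by (intro LIMSEQ_le_const2[OF lim]) auto
  with le have "infsum f {t. t > 0} = l" by simp
  then show ?thesis using has_sum_infsum[OF summ] by simp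
qed

definition aa :: "nat \<Rightarrow> real" where
  "aa n = (if prime n then 1 - 1 / (real n * (real n - 1)) else 1)"

lemma artinA_aa: "artinA = prodinf aa"
  unfolding artinA_def aa_def ..

lemma aa_pos: "aa n > 0"
proof (cases "prime n")
  case True
  then have n2: "real n \<ge> 2" using prime_ge_2_nat by (simp add: of_nat_le_iff[symmetric])
  then have "real n * (real n - 1) \<ge> 2 * 1" by (intro mult_mono) auto
  then have "1 / (real n * (real n - 1)) \<le> 1/2" by (simp add: divide_simps)
  then show ?thesis using True by (simp add: aa_def)
qed (simp add: aa_def)

lemma aa_conv: "convergent_prod aa"
proof (rule abs_convergent_prod_imp_convergent_prod, rule summable_imp_abs_convergent_prod)
  have s: "summable (\<lambda>n. 2 * inverse (real n ^ 2))"
    by (intro summable_mult inverse_power_summable) auto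
  show "summable (\<lambda>i. norm (aa i - 1))"
  proof (rule summable_comparison_test'[OF s])
    fix n :: nat
    show "norm (norm (aa n - 1)) \<le> 2 * inverse (real n ^ 2)"
    proof (cases "prime n")
      case True
      then have n2: "real n \<ge> 2" using prime_ge_2_nat by (simp add: of_nat_le_iff[symmetric])
      have pos: "real n * (real n - 1) > 0" using n2 by simp
      have "real n ^ 2 \<le> 2 * (real n * (real n - 1))" using n2 by (simp add: power2_eq_square algebra_simps)
      then have "1 / (real n * (real n - 1)) \<le> 2 / real n ^ 2"
        using pos n2 by (simp add: divide_simps)
      moreover have "norm (norm (aa n - 1)) = 1 / (real n * (real n - 1))"
        using True pos by (simp add: aa_def)
      ultimately show ?thesis by (simp add: divide_inverse)
    qed (simp add: aa_def)
  qed
qed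

lemma artinA_pos: "artinA > 0"
  unfolding artinA_aa by (rule less_0_prodinf[OF aa_conv aa_pos])

lemma artinA_lim: "(\<lambda>N. \<Prod>i\<le>N. aa i) \<longlonglongrightarrow> artinA"
  unfolding artinA_aa by (rule convergent_prod_LIMSEQ[OF aa_conv])


definition hh :: "nat \<Rightarrow> real" where
  "hh p = ((real p)^2 - 1) / ((real p)^2 - real p - 1)"

definition rr :: "nat \<Rightarrow> nat \<Rightarrow> nat \<Rightarrow> real" where
  "rr D E m = (if coprime m E then (1 / (real m)^2) * (\<Prod>p\<in>prime_factors m - prime_factors D. hh p) else 0)"

definition Lf :: "nat \<Rightarrow> nat \<Rightarrow> nat \<Rightarrow> real" where
  "Lf D E p = (if p dvd E then 1 else if p dvd D then (real p)^2 / ((real p)^2 - 1)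
     else real p * (real p - 1) / ((real p)^2 - real p - 1))"

lemma prime_real_ge2: "prime (p::nat) \<Longrightarrow> real p \<ge> 2"
  using prime_ge_2_nat by (simp add: of_nat_le_iff[symmetric])

lemma hh_pos: assumes "prime p" shows "hh p > 0"
proof -
  have p2: "real p \<ge> 2" using prime_real_ge2[OF assms] .
  have m: "real p * real p \<ge> 2 * real p" using p2 by (intro mult_right_mono) auto
  have a: "(real p)^2 - 1 > 0" using p2 m unfolding power2_eq_square by linarith
  have b: "(real p)^2 - real p - 1 > 0" using p2 m unfolding power2_eq_square by linarith
  show ?thesis using a b by (simp add: hh_def)
qed

lemma rr_nonneg: "rr D E m \<ge> 0"
proof -
  have "(\<Prod>p\<in>prime_factors m - prime_factors D. hh p) \<ge> 0"
    by (rule prod_nonneg) (use hh_pos in \<open>auto intro: less_imp_le\<close>)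
  then show ?thesis unfolding rr_def by simp
qed

lemma rr_1: "rr D E 1 = 1"
  by (simp add: rr_def)

lemma pf_disjoint: assumes "coprime (a::nat) b" shows "prime_factors a \<inter> prime_factors b = {}"
proof (rule ccontr)
  assume "prime_factors a \<inter> prime_factors b \<noteq> {}"
  then obtain p where "p \<in> prime_factors a" "p \<in> prime_factors b" by blast
  then have "prime p" "p dvd a" "p dvd b" by auto
  then show False using coprime_common_divisor[OF assms] by (metis not_prime_unit)
qed

lemma rr_mult:
  assumes "coprime a b" "a > 0" "b > 0"
  shows "rr D E (a*b) = rr D E a * rr D E b"
proof (cases "coprime a E \<and> coprime b E")
  case False
  then show ?thesis by (auto simp: rr_def)
next
  case True
  have pf: "prime_factors (a*b) - prime_factors D = (prime_factors a - prime_factors D) \<union> (prime_factors b - prime_factors D)"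
    using assms by (simp add: prime_factors_product Un_Diff)
  have dj: "(prime_factors a - prime_factors D) \<inter> (prime_factors b - prime_factors D) = {}"
    using pf_disjoint[OF assms(1)] by blast
  have "(\<Prod>p\<in>prime_factors (a*b) - prime_factors D. hh p) =
        (\<Prod>p\<in>prime_factors a - prime_factors D. hh p) * (\<Prod>p\<in>prime_factors b - prime_factors D. hh p)"
    unfolding pf by (rule prod.union_disjoint) (use dj in auto)
  moreover have "1 / (real (a*b))^2 = 1 / (real a)^2 * (1 / (real b)^2)"
    by (simp add: power_mult_distrib)
  ultimately show ?thesis using True by (simp add: rr_def)
qed

lemma rr_pow:
  assumes p: "prime p" and D: "D > 0" and k: "k > 0"
  shows "rr D E (p^k) = (if p dvd E then 0 else (1 / (real p)^2)^k * (if p dvd D then 1 else hh p))"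
proof -
  have cop: "coprime (p^k) E \<longleftrightarrow> \<not> p dvd E"
  proof -
    have "coprime (p^k) E \<longleftrightarrow> coprime p E" using k by simp
    also have "\<dots> \<longleftrightarrow> \<not> p dvd E"
      using p prime_imp_coprime coprime_common_divisor[of p E p] by (metis dvd_refl not_prime_unit)
    finally show ?thesis .
  qed
  have pfk: "prime_factors (p^k) = {p}"
    using p k by (simp add: prime_factorization_prime_power)
  have pfD: "p \<in> prime_factors D \<longleftrightarrow> p dvd D" using p D by (simp add: in_prime_factors_iff)
  have "(1 / (real (p^k))^2) = (1 / (real p)^2)^k"
    by (simp add: power_mult_distrib power_divide flip: power_mult) (simp add: mult.commute power_mult)
  moreover have "{p} - prime_factors D = (if p dvd D then {} else {p})" using pfD by auto
  ultimately show ?thesis using cop unfolding rr_def pfk by simp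
qed


lemma rr_loc:
  assumes p: "prime p" and D: "D > 0"
  shows "((\<lambda>k. rr D E (p^k)) has_sum Lf D E p) UNIV"
proof (rule sums_nonneg_imp_has_sum[OF _ rr_nonneg])
  define P where "P = real p"
  have P2: "P \<ge> 2" using prime_real_ge2[OF p] by (simp add: P_def)
  have m: "P * P \<ge> 2 * P" using P2 by (intro mult_right_mono) auto
  have a: "P^2 - 1 > 0" using P2 m unfolding power2_eq_square by linarith
  have b: "P^2 - P - 1 > 0" using P2 m unfolding power2_eq_square by linarith
  define q where "q = 1 / P^2"
  have q0: "q > 0" using P2 by (simp add: q_def)
  have q1: "q < 1" using a unfolding q_def by (simp add: divide_simps)
  show "(\<lambda>k. rr D E (p^k)) sums Lf D E p"
  proof (cases "p dvd E")
    case True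
    have "(\<lambda>k. rr D E (p^k)) = (\<lambda>k. if k = 0 then 1 else 0)"
      using rr_pow[OF p D] True rr_1 by (auto intro!: ext)
    then show ?thesis using sums_single[of 0 "\<lambda>_. 1::real"] True by (simp add: Lf_def)
  next
    case False
    define c where "c = (if p dvd D then 1 else hh p)"
    have g: "rr D E (p^k) = (if k = 0 then 1 else c * q^k)" for k
      using rr_pow[OF p D, of k E] False rr_1 by (simp add: c_def q_def P_def mult.commute)
    have "(\<lambda>k. (c*q) * q^k) sums ((c*q) * (1 / (1 - q)))"
      by (rule sums_mult, rule geometric_sums) (use q0 q1 in simp)
    moreover have "(\<lambda>k. rr D E (p^(Suc k))) = (\<lambda>k. (c*q) * q^k)"
      by (rule ext, subst g) simp
    ultimately have "(\<lambda>k. rr D E (p^(Suc k))) sums ((c*q) * (1 / (1 - q)))"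
      by simp
    then have "(\<lambda>k. rr D E (p^k)) sums ((c*q) * (1 / (1 - q)) + rr D E (p^0))"
      using sums_Suc_iff[of "\<lambda>k. rr D E (p^k)"] by simp
    moreover have "(c*q) * (1 / (1 - q)) + rr D E (p^0) = Lf D E p"
    proof -
      have qq: "q * (1 / (1 - q)) = 1 / (P^2 - 1)"
        using a P2 unfolding q_def by (simp add: field_simps)
      have r0: "rr D E (p^0) = 1" using rr_1 by simp
      have e: "(c*q) * (1 / (1 - q)) + rr D E (p^0) = 1 + c * (1 / (P^2 - 1))"
        unfolding r0 mult.assoc qq by simp
      show ?thesis
      proof (cases "p dvd D")
        case True
        have "1 + 1 * (1 / (P^2 - 1)) = P^2 / (P^2 - 1)"
          using a by (simp add: field_simps)
        moreover have "Lf D E p = P^2/(P^2-1)" using False True by (simp add: Lf_def P_def)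
        moreover have "c = 1" using True by (simp add: c_def)
        ultimately show ?thesis unfolding e by simp
      next
        case nD: False
        have "1 + hh p * (1 / (P^2 - 1)) = P * (P - 1) / (P^2 - P - 1)"
          using a b by (simp add: hh_def P_def[symmetric] field_simps power2_eq_square)
        moreover have "Lf D E p = P * (P - 1) / (P^2 - P - 1)" using False nD by (simp add: Lf_def P_def)
        moreover have "c = hh p" using nD by (simp add: c_def)
        ultimately show ?thesis unfolding e by simp
      qed
    qed
    ultimately show ?thesis by simp
  qed
qed


lemma aa_Lf_1:
  assumes p: "prime p" and "\<not> p dvd D" "\<not> p dvd E"
  shows "aa p * Lf D E p = 1"
proof -
  define P where "P = real p"
  have P2: "P \<ge> 2" using prime_real_ge2[OF p] by (simp add: P_def)
  have m: "P * P \<ge> 2 * P" using P2 by (intro mult_right_mono) auto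
  have b: "P^2 - P - 1 > 0" using P2 m unfolding power2_eq_square by linarith
  have c: "P * (P - 1) > 0" using P2 by simp
  have Y: "P^2 - P - 1 = P * (P - 1) - 1" by (simp add: power2_eq_square algebra_simps)
  have gen: "(1 - 1 / X) * (X / (X - 1)) = 1" if "X > 1" for X :: real
    using that by (simp add: field_simps)
  have h1: "(1 - 1 / (P * (P - 1))) * (P * (P - 1) / (P^2 - P - 1)) = 1"
    unfolding Y by (rule gen) (use b Y in simp)
  have a1: "aa p = 1 - 1 / (P * (P - 1))" using p by (simp add: aa_def P_def)
  have l1: "Lf D E p = P * (P - 1) / (P^2 - P - 1)" using assms by (simp add: Lf_def P_def)
  show ?thesis unfolding a1 l1 by (rule h1)
qed

lemma rr_total:
  assumes D: "D > 0" and E: "E > 0"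
  shows "(rr D E has_sum ((\<Prod>p\<in>prime_factors (D*E). aa p * Lf D E p) / artinA)) {t. t > 0}"
proof -
  define C where "C = (\<Prod>p\<in>prime_factors (D*E). aa p * Lf D E p)"
  have hs: "(rr D E has_sum (\<Prod>p\<in>{p. prime p \<and> p \<le> N}. Lf D E p)) (SS N)" for N
  proof (rule euler_SS)
    show "\<And>a b. coprime a b \<Longrightarrow> 0 < a \<Longrightarrow> 0 < b \<Longrightarrow> rr D E (a * b) = rr D E a * rr D E b"
      by (rule rr_mult)
    show "rr D E 1 = 1" by (rule rr_1)
    show "\<And>t. 0 < t \<Longrightarrow> 0 \<le> rr D E t" by (rule rr_nonneg)
    show "\<And>p. prime p \<Longrightarrow> ((\<lambda>k. rr D E (p ^ k)) has_sum Lf D E p) UNIV"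
      using rr_loc D by blast
  qed
  have ev: "(\<Prod>p\<in>{p. prime p \<and> p \<le> N}. Lf D E p) = C / (\<Prod>i\<le>N. aa i)" if N: "N \<ge> D*E" for N
  proof -
    define Pr where "Pr = {p. prime p \<and> p \<le> N}"
    have fPr: "finite Pr" unfolding Pr_def by (rule finite_subset[of _ "{..N}"]) auto
    have A: "(\<Prod>i\<le>N. aa i) = (\<Prod>p\<in>Pr. aa p)"
      by (rule prod.mono_neutral_right) (auto simp: Pr_def aa_def)
    have B: "(\<Prod>p\<in>Pr. Lf D E p) * (\<Prod>p\<in>Pr. aa p) = (\<Prod>p\<in>Pr. aa p * Lf D E p)"
      by (simp add: prod.distrib mult.commute)
    have sub: "prime_factors (D*E) \<subseteq> Pr"
    proof
      fix p assume p: "p \<in> prime_factors (D*E)"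
      then have "p dvd D*E" "prime p" by auto
      then have "p \<le> D*E" using D E by (intro dvd_imp_le) auto
      then show "p \<in> Pr" using N \<open>prime p\<close> by (simp add: Pr_def)
    qed
    have Cq: "(\<Prod>p\<in>Pr. aa p * Lf D E p) = C"
      unfolding C_def
    proof (rule prod.mono_neutral_right[OF fPr sub])
      show "\<forall>i\<in>Pr - prime_factors (D * E). aa i * Lf D E i = 1"
      proof
        fix p assume p: "p \<in> Pr - prime_factors (D * E)"
        then have pp: "prime p" by (simp add: Pr_def)
        have "\<not> p dvd D*E" using p pp D E by (auto simp: in_prime_factors_iff)
        then show "aa p * Lf D E p = 1" using aa_Lf_1[OF pp] by (meson dvd_mult dvd_mult2)
      qed
    qed
    have pos: "(\<Prod>i\<le>N. aa i) > 0" by (rule prod_pos) (use aa_pos less_imp_le in auto)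
    show ?thesis using B Cq pos unfolding A Pr_def[symmetric] by (simp add: field_simps)
  qed
  have "(\<lambda>N. C / (\<Prod>i\<le>N. aa i)) \<longlonglongrightarrow> C / artinA"
    by (intro tendsto_divide tendsto_const artinA_lim) (use artinA_pos in simp)
  moreover have "eventually (\<lambda>N. C / (\<Prod>i\<le>N. aa i) = (\<Prod>p\<in>{p. prime p \<and> p \<le> N}. Lf D E p)) sequentially"
    by (rule eventually_sequentiallyI[of "D*E"]) (simp add: ev)
  ultimately have lim: "(\<lambda>N. \<Prod>p\<in>{p. prime p \<and> p \<le> N}. Lf D E p) \<longlonglongrightarrow> C / artinA"
    by (rule Lim_transform_eventually)
  show ?thesis unfolding C_def[symmetric]
    by (rule has_sum_SS_limit[OF rr_nonneg hs lim])
qed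


lemma rfun_mult:
  assumes d: "d > 0" and m: "m > 0"
  shows "rfun (d*m) = rfun d * rr d 1 m"
proof -
  have pf: "prime_factors (d*m) = prime_factors d \<union> (prime_factors m - prime_factors d)"
    using d m by (auto simp: prime_factors_product)
  have "(\<Prod>p\<in>prime_factors (d*m). ((real p)^2 - 1) / ((real p)^2 - real p - 1)) =
        (\<Prod>p\<in>prime_factors d. hh p) * (\<Prod>p\<in>prime_factors m - prime_factors d. hh p)"
    unfolding pf hh_def by (rule prod.union_disjoint) auto
  moreover have "1 / (real (d*m))^2 = 1 / (real d)^2 * (1 / (real m)^2)"
    by (simp add: power_mult_distrib)
  ultimately show ?thesis unfolding rfun_def rr_def hh_def by simp
qed

lemma infsum_rr:
  assumes "D > 0" "E > 0"
  shows "infsum (rr D E) {t. t > 0} = (\<Prod>p\<in>prime_factors (D*E). aa p * Lf D E p) / artinA"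
  using rr_total[OF assms] by (rule infsumI)

lemma rho0_eq:
  assumes d: "d > 0"
  shows "rho 0 d = rfun d * (\<Prod>p\<in>prime_factors d. aa p * Lf d 1 p)"
proof -
  have set: "{t::nat. t \<ge> 1 \<and> [int t = 0] (mod int d)} = (\<lambda>m. d*m) ` {m. m > 0}"
  proof -
    have "[int t = 0] (mod int d) \<longleftrightarrow> d dvd t" for t
      by (simp add: cong_0_iff)
    then show ?thesis using d by (auto elim!: dvdE)
  qed
  have inj: "inj_on (\<lambda>m. d*m) {m. m > 0}" using d by (auto intro: inj_onI)
  have "infsum rfun {t::nat. t \<ge> 1 \<and> [int t = 0] (mod int d)} = infsum (rfun \<circ> (\<lambda>m. d*m)) {m. m > 0}"
    unfolding set by (rule infsum_reindex[OF inj])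
  also have "\<dots> = infsum (\<lambda>m. rfun d * rr d 1 m) {m. m > 0}"
    by (rule infsum_cong) (use d rfun_mult in auto)
  also have "\<dots> = rfun d * infsum (rr d 1) {m. m > 0}"
    by (rule infsum_cmult_right) (use rr_total[of d 1] d in \<open>auto simp: summable_on_def\<close>)
  also have "\<dots> = rfun d * ((\<Prod>p\<in>prime_factors d. aa p * Lf d 1 p) / artinA)"
    using infsum_rr[of d 1] d by simp
  finally show ?thesis unfolding rho_def using artinA_pos by simp
qed

lemma cong_d_2d:
  assumes d: "d > 0"
  shows "{t::nat. t \<ge> 1 \<and> [int t = int d] (mod int (2*d))} = (\<lambda>m. d*m) ` {m. m > 0 \<and> odd m}"
proof -
  have c: "[int t = int d] (mod int (2*d)) \<longleftrightarrow> t mod (2*d) = d" for t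
  proof -
    have "[int t = int d] (mod int (2*d)) \<longleftrightarrow> [t = d] (mod (2*d))"
      by (metis cong_int_iff of_nat_mult of_nat_numeral)
    also have "\<dots> \<longleftrightarrow> t mod (2*d) = d mod (2*d)" by (simp add: cong_def)
    also have "d mod (2*d) = d" using d by simp
    finally show ?thesis .
  qed
  show ?thesis
  proof (rule equalityI; rule subsetI)
    fix t assume "t \<in> {t::nat. t \<ge> 1 \<and> [int t = int d] (mod int (2*d))}"
    then have tm: "t mod (2*d) = d" using c by simp
    have "t = 2*d*(t div (2*d)) + t mod (2*d)" by simp
    then have "t = d * (2 * (t div (2*d)) + 1)" using tm by (simp add: algebra_simps)
    moreover have "odd (2 * (t div (2*d)) + 1)" "2 * (t div (2*d)) + 1 > 0" by auto
    ultimately show "t \<in> (\<lambda>m. d*m) ` {m. m > 0 \<and> odd m}"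
      by (intro image_eqI[of _ _ "2 * (t div (2*d)) + 1"]) auto
  next
    fix t assume "t \<in> (\<lambda>m. d*m) ` {m. m > 0 \<and> odd m}"
    then obtain m where m: "t = d*m" "odd m" by auto
    then obtain q where q: "m = 2*q + 1" by (auto elim: oddE)
    have "t = d + (2*d)*q" using m q by (simp add: algebra_simps)
    then have "t mod (2*d) = d" using d by simp
    moreover have "t \<ge> 1" using m d by (cases m) auto
    ultimately show "t \<in> {t::nat. t \<ge> 1 \<and> [int t = int d] (mod int (2*d))}" using c by simp
  qed
qed

lemma rhod_eq:
  assumes d: "d > 0"
  shows "rho (int d) (2*d) = rfun d * (\<Prod>p\<in>prime_factors (d*2). aa p * Lf d 2 p)"
proof -
  have inj: "inj_on (\<lambda>m. d*m) {m. m > 0 \<and> odd m}" using d by (auto intro: inj_onI)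
  have "infsum rfun {t::nat. t \<ge> 1 \<and> [int t = int d] (mod int (2*d))} = infsum (rfun \<circ> (\<lambda>m. d*m)) {m. m > 0 \<and> odd m}"
    unfolding cong_d_2d[OF d] by (rule infsum_reindex[OF inj])
  also have "\<dots> = infsum (\<lambda>m. rfun d * rr d 2 m) {m. m > 0 \<and> odd m}"
  proof (rule infsum_cong)
    fix m :: nat assume m: "m \<in> {m. m > 0 \<and> odd m}"
    then have "coprime m 2" by auto
    then have "rr d 2 m = rr d 1 m" by (simp add: rr_def)
    then show "(rfun \<circ> (\<lambda>m. d*m)) m = rfun d * rr d 2 m" using rfun_mult d m by simp
  qed
  also have "\<dots> = infsum (\<lambda>m. rfun d * rr d 2 m) {m. m > 0}"
  proof (rule infsum_cong_neutral)
    show "\<And>x. x \<in> {m. m > 0 \<and> odd m} - {m. m > 0} \<Longrightarrow> rfun d * rr d 2 x = 0" by auto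
    show "\<And>x. x \<in> {m. m > 0} - {m. m > 0 \<and> odd m} \<Longrightarrow> rfun d * rr d 2 x = 0"
      by (auto simp: rr_def)
    show "\<And>x. x \<in> {m. m > 0 \<and> odd m} \<inter> {m. m > 0} \<Longrightarrow> rfun d * rr d 2 x = rfun d * rr d 2 x" by simp
  qed
  also have "\<dots> = rfun d * infsum (rr d 2) {m. m > 0}"
    by (rule infsum_cmult_right) (use rr_total[of d 2] d in \<open>auto simp: summable_on_def\<close>)
  also have "\<dots> = rfun d * ((\<Prod>p\<in>prime_factors (d*2). aa p * Lf d 2 p) / artinA)"
    using infsum_rr[of d 2] d by simp
  finally show ?thesis unfolding rho_def using artinA_pos by simp
qed


lemma local_val:
  assumes p: "prime p" and pd: "p dvd d"
  shows "hh p * (aa p * Lf d 1 p) = real p / (real p - 1)"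
proof -
  define P where "P = real p"
  have P2: "P \<ge> 2" using prime_real_ge2[OF p] by (simp add: P_def)
  have m: "P * P \<ge> 2 * P" using P2 by (intro mult_right_mono) auto
  have a: "P^2 - 1 > 0" using P2 m unfolding power2_eq_square by linarith
  have b: "P^2 - P - 1 > 0" using P2 m unfolding power2_eq_square by linarith
  have n1: "\<not> p dvd 1" using p by (simp add: prime_nat_iff)
  have L: "Lf d 1 p = P^2 / (P^2 - 1)" using n1 pd by (simp add: Lf_def P_def)
  have A: "aa p = (P^2 - P - 1) / (P * (P - 1))"
    using p P2 by (simp add: aa_def P_def[symmetric] field_simps power2_eq_square)
  have H: "hh p = (P^2 - 1) / (P^2 - P - 1)" by (simp add: hh_def P_def)
  have g: "u / v * (v / w * (z / u)) = z / w" if "u \<noteq> 0" "v \<noteq> 0" "w \<noteq> 0" for u v w z :: real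
    using that by (simp add: field_simps)
  have w: "P * (P - 1) \<noteq> 0" using P2 by simp
  have "(P^2 - 1) / (P^2 - P - 1) * ((P^2 - P - 1) / (P * (P - 1)) * (P^2 / (P^2 - 1))) = P^2 / (P * (P - 1))"
    by (rule g) (use a b w in auto)
  also have "\<dots> = P / (P - 1)" using P2 by (simp add: power2_eq_square)
  finally have "(P^2 - 1) / (P^2 - P - 1) * ((P^2 - P - 1) / (P * (P - 1)) * (P^2 / (P^2 - 1))) = P / (P - 1)" .
  then show ?thesis unfolding L A H P_def .
qed

lemma part1:
  assumes d: "d > 0"
  shows "rfun d * (\<Prod>p\<in>prime_factors d. aa p * Lf d 1 p) = 1 / (real d * real (totient d))"
proof -
  define X where "X = (\<Prod>p\<in>prime_factors d. real p / (real p - 1))"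
  define Y where "Y = (\<Prod>p\<in>prime_factors d. 1 - 1 / real p)"
  have "rfun d * (\<Prod>p\<in>prime_factors d. aa p * Lf d 1 p) =
        1 / (real d)^2 * ((\<Prod>p\<in>prime_factors d. hh p) * (\<Prod>p\<in>prime_factors d. aa p * Lf d 1 p))"
    by (simp add: rfun_def hh_def)
  also have "(\<Prod>p\<in>prime_factors d. hh p) * (\<Prod>p\<in>prime_factors d. aa p * Lf d 1 p) = X"
    unfolding X_def prod.distrib[symmetric]
  proof (rule prod.cong)
    fix p assume "p \<in> prime_factors d"
    then show "hh p * (aa p * Lf d 1 p) = real p / (real p - 1)"
      by (intro local_val) auto
  qed simp
  finally have lhs: "rfun d * (\<Prod>p\<in>prime_factors d. aa p * Lf d 1 p) = 1 / (real d)^2 * X" .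
  have tot: "real (totient d) = real d * Y" unfolding Y_def by (rule totient_formula2)
  have XY: "X * Y = 1"
  proof -
    have "X * Y = (\<Prod>p\<in>prime_factors d. real p / (real p - 1) * (1 - 1 / real p))"
      unfolding X_def Y_def by (rule prod.distrib[symmetric])
    also have "\<dots> = (\<Prod>p\<in>prime_factors d. 1)"
    proof (rule prod.cong)
      fix p assume "p \<in> prime_factors d"
      then have "real p \<ge> 2" using prime_real_ge2 by auto
      then show "real p / (real p - 1) * (1 - 1 / real p) = 1" by (simp add: field_simps)
    qed simp
    finally show ?thesis by simp
  qed
  have "Y \<noteq> 0" using XY by auto
  then show ?thesis unfolding lhs tot using d XY
    by (simp add: field_simps power2_eq_square)
qed


lemma rho0_val: "d > 0 \<Longrightarrow> rho 0 d = 1 / (real d * real (totient d))"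
  using rho0_eq part1 by simp

lemma aa2: "aa 2 = 1/2" by (simp add: aa_def)

lemma Lf_2_1: assumes p: "prime p" "p \<noteq> 2" shows "Lf d 2 p = Lf d 1 p"
proof -
  have "\<not> p dvd 2" using p primes_dvd_imp_eq two_is_prime_nat by blast
  moreover have "\<not> p dvd 1" using p by (simp add: prime_nat_iff)
  ultimately show ?thesis by (simp add: Lf_def)
qed

lemma cong_rest:
  "(\<Prod>p\<in>prime_factors d - {2}. aa p * Lf d 2 p) = (\<Prod>p\<in>prime_factors d - {2}. aa p * Lf d 1 p)"
proof (rule prod.cong)
  fix p assume p: "p \<in> prime_factors d - {2}"
  then have "prime p" "p \<noteq> 2" by auto
  then have "Lf d 2 p = Lf d 1 p" by (rule Lf_2_1)
  then show "aa p * Lf d 2 p = aa p * Lf d 1 p" by (rule arg_cong)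
qed simp

lemma pf2_eq: "(d::nat) > 0 \<Longrightarrow> prime_factors (d*2) = prime_factors d \<union> {2}"
  by (simp add: prime_factors_product prime_factorization_prime)

lemma main_odd:
  assumes d: "d > 0" and odd: "odd d"
  shows "rho (int d) (2*d) = rho 0 (2*d)"
proof -
  have r0: "rho 0 d = 1 / (real d * real (totient d))" by (rule rho0_val[OF d])
  have r2: "rho 0 (2*d) = 1 / (real (2*d) * real (totient (2*d)))" by (rule rho0_val) (use d in simp)
  have rd: "rho (int d) (2*d) = rfun d * (\<Prod>p\<in>prime_factors (d*2). aa p * Lf d 2 p)"
    by (rule rhod_eq[OF d])
  have r0': "rho 0 d = rfun d * (\<Prod>p\<in>prime_factors d. aa p * Lf d 1 p)"
    by (rule rho0_eq[OF d])
  have tpos: "real (totient d) > 0" using d by simp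
  have n2: "2 \<notin> prime_factors d" using odd by auto
  have "(\<Prod>p\<in>prime_factors (d*2). aa p * Lf d 2 p) = (aa 2 * Lf d 2 2) * (\<Prod>p\<in>prime_factors d. aa p * Lf d 2 p)"
    unfolding pf2_eq[OF d] using n2 by (simp add: prod.insert)
  also have "(\<Prod>p\<in>prime_factors d. aa p * Lf d 2 p) = (\<Prod>p\<in>prime_factors d. aa p * Lf d 1 p)"
    using cong_rest[of d] n2 by simp
  also have "aa 2 * Lf d 2 2 = 1/2" by (simp add: aa2 Lf_def)
  finally have "rho (int d) (2*d) = 1/2 * rho 0 d" unfolding rd r0' by simp
  moreover have "totient (2*d) = totient d" using odd by (simp add: totient_double)
  ultimately show "rho (int d) (2*d) = rho 0 (2*d)" unfolding r2 r0 using d tpos by (simp add: field_simps)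
qed

lemma main_even:
  assumes d: "d > 0" and ev: "even d"
  shows "rho (int d) (2*d) = 3 * rho 0 (2*d)"
proof -
  have r0: "rho 0 d = 1 / (real d * real (totient d))" by (rule rho0_val[OF d])
  have r2: "rho 0 (2*d) = 1 / (real (2*d) * real (totient (2*d)))" by (rule rho0_val) (use d in simp)
  have rd: "rho (int d) (2*d) = rfun d * (\<Prod>p\<in>prime_factors (d*2). aa p * Lf d 2 p)"
    by (rule rhod_eq[OF d])
  have r0': "rho 0 d = rfun d * (\<Prod>p\<in>prime_factors d. aa p * Lf d 1 p)"
    by (rule rho0_eq[OF d])
  have tpos: "real (totient d) > 0" using d by simp
  have i2: "2 \<in> prime_factors d" using ev d by (auto simp: in_prime_factors_iff)
  then have pfe: "prime_factors (d*2) = prime_factors d" unfolding pf2_eq[OF d] by auto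
  define R where "R = (\<Prod>p\<in>prime_factors d - {2}. aa p * Lf d 1 p)"
  have A: "(\<Prod>p\<in>prime_factors (d*2). aa p * Lf d 2 p) = (aa 2 * Lf d 2 2) * R"
    unfolding pfe R_def cong_rest[of d, symmetric] using i2 by (simp add: prod.remove)
  have B: "(\<Prod>p\<in>prime_factors d. aa p * Lf d 1 p) = (aa 2 * Lf d 1 2) * R"
    unfolding R_def using i2 by (simp add: prod.remove)
  have c2: "aa 2 * Lf d 2 2 = 1/2" by (simp add: aa2 Lf_def)
  have c1: "aa 2 * Lf d 1 2 = 2/3" using ev by (simp add: aa2 Lf_def)
  have "rho (int d) (2*d) = 3/4 * rho 0 d" unfolding rd r0' A B c1 c2 by simp
  moreover have "totient (2*d) = 2 * totient d" using ev by (simp add: totient_double)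
  ultimately show "rho (int d) (2*d) = 3 * rho 0 (2*d)" unfolding r2 r0 using d tpos by (simp add: field_simps)
qed

theorem mainTheorem9:
  fixes d :: nat
  assumes "d \<ge> 1"
  shows "rho 0 d = 1 / (real d * real (totient d))
    \<and> rho (int d) (2 * d) = (if odd d then rho 0 (2 * d) else 3 * rho 0 (2 * d))"
proof -
  have d: "d > 0" using assms by simp
  show ?thesis using rho0_val[OF d] main_odd[OF d] main_even[OF d] by simp
qed

end
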